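(* Let $A=\{a_1^{k_1},\ldots,a_n^{k_n}\}$ be a multiset, let $m\ge 0$ be an integer, let $r=\max(k_1,\ldots,k_n)$ and $s=\min(m,r)$. Let $\Lambda_m(A)$ be the set of all tuples $(\lambda_1,\ldots,\lambda_s)$ of non-negative integers satisfying $$\sum_{i=1}^s i\lambda_i=m \quad\text{and}\quad \sum_{i=j}^s\lambda_i\le \overline{k_j}\ \ \text{for } j=1,\ldots,s.$$ Then $$|C_m(A)|=\sum_{(\lambda_1,\ldots,\lambda_s)\in\Lambda_m(A)}\ \prod_{j=1}^s\binom{\overline{k_j}-\sum_{i=j+1}^s\lambda_i}{\lambda_j},$$ where an empty sum $\sum_{i=s+1}^s\lambda_i$ is $0$.
   Context: A multiset $A=\{a_1^{k_1},\ldots,a_n^{k_n}\}$ consists of distinct elements $a_1,\ldots,a_n$ with positive integer multiplicities $k_1,\ldots,k_n$; its cardinality is $|A|=k_1+\cdots+k_n$. A submultiset of $A$ is a multiset $\{a_1^{r_1},\ldots,a_n^{r_n}\}$ with integers $0\le r_i\le k_i$ (elements with $r_i=0$ being absent), of cardinality $r_1+\cdots+r_n$. $C_m(A)$ denotes the set of all submultisets of $A$ of cardinality $m$. For each integer $j\ge1$, $\overline{k_j}=|\{i\in\{1,\ldots,n\}: k_i\ge j\}|$ (the adjoint specification of $A$). *)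

theory Defs
  imports "HOL-Library.Multiset"
begin

definition submsets :: "nat \<Rightarrow> 'a multiset \<Rightarrow> 'a multiset set" where
  "submsets m A = {B. B \<subseteq># A \<and> size B = m}"

text \<open>Adjoint specification: kbar_j = number of distinct elements with multiplicity at least j.\<close>
definition adj :: "'a multiset \<Rightarrow> nat \<Rightarrow> nat" where
  "adj A j = card {x \<in> set_mset A. count A x \<ge> j}"

definition maxmult :: "'a multiset \<Rightarrow> nat" where
  "maxmult A = Max (count A ` set_mset A)"

text \<open>Lambda_m(A): tuples (lambda_1,...,lambda_s), s = min m r, represented as lists l
  of length s with lambda_i = l ! (i - 1).\<close>
definition Lam :: "nat \<Rightarrow> 'a multiset \<Rightarrow> nat list set" where
  "Lam m A = (let s = min m (maxmult A) in
     {l. length l = s \<and> (\<Sum>i=1..s. i * l ! (i - 1)) = m \<and>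
         (\<forall>j\<in>{1..s}. (\<Sum>i=j..s. l ! (i - 1)) \<le> adj A j)})"

end

theory Submission
  imports Defs
begin

definition TT :: "'a multiset \<Rightarrow> nat \<Rightarrow> 'a set" where
  "TT A i = {x \<in> set_mset A. count A x \<ge> i}"

lemma finite_TT[simp]: "finite (TT A i)"
  unfolding TT_def by simp

lemma TT_mono: "j \<le> i \<Longrightarrow> TT A i \<subseteq> TT A j"
  unfolding TT_def by auto

definition GG :: "'a multiset \<Rightarrow> nat \<Rightarrow> nat list \<Rightarrow> nat \<Rightarrow> (nat \<Rightarrow> 'a set) set" where
  "GG A s l j = {Ss. (\<forall>i. (i < j \<or> s < i) \<longrightarrow> Ss i = {}) \<and>
     (\<forall>i\<in>{j..s}. Ss i \<subseteq> TT A i \<and> card (Ss i) = l!(i-1)) \<and>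
     (\<forall>i\<in>{j..s}. \<forall>i'\<in>{j..s}. i \<noteq> i' \<longrightarrow> Ss i \<inter> Ss i' = {})}"

lemma GG_base: "GG A s l (Suc s) = {\<lambda>_. {}}"
  unfolding GG_def by (auto simp: fun_eq_iff) (metis empty_iff not_less_eq)

lemma GG_step:
  assumes "j \<le> s"
  shows "GG A s l j = (\<lambda>(Ss,S). Ss(j:=S)) ` (SIGMA Ss:GG A s l (Suc j).
           {S. S \<subseteq> TT A j - (\<Union>i\<in>{Suc j..s}. Ss i) \<and> card S = l!(j-1)})"
proof
  show "GG A s l j \<subseteq> (\<lambda>(Ss,S). Ss(j:=S)) ` (SIGMA Ss:GG A s l (Suc j).
           {S. S \<subseteq> TT A j - (\<Union>i\<in>{Suc j..s}. Ss i) \<and> card S = l!(j-1)})"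
  proof
    fix Ss' assume h: "Ss' \<in> GG A s l j"
    let ?Ss = "Ss'(j:={})"
    have "?Ss \<in> GG A s l (Suc j)"
      using h unfolding GG_def by auto
    moreover have "Ss' j \<subseteq> TT A j - (\<Union>i\<in>{Suc j..s}. ?Ss i) \<and> card (Ss' j) = l!(j-1)"
    proof -
      have P: "\<forall>i\<in>{j..s}. Ss' i \<subseteq> TT A i \<and> card (Ss' i) = l!(i-1)"
        and D: "\<forall>i\<in>{j..s}. \<forall>i'\<in>{j..s}. i \<noteq> i' \<longrightarrow> Ss' i \<inter> Ss' i' = {}"
        using h unfolding GG_def by blast+
      have j: "j \<in> {j..s}" using assms by simp
      have "Ss' j \<inter> (\<Union>i\<in>{Suc j..s}. ?Ss i) = {}"
      proof -
        { fix i assume i: "i \<in> {Suc j..s}"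
          then have "?Ss i = Ss' i" by simp
          moreover have "Ss' j \<inter> Ss' i = {}" using D j i by auto
          ultimately have "Ss' j \<inter> ?Ss i = {}" by simp }
        then show ?thesis by blast
      qed
      then show ?thesis using P j by blast
    qed
    moreover have "Ss' = ?Ss(j := Ss' j)" by simp
    ultimately show "Ss' \<in> (\<lambda>(Ss,S). Ss(j:=S)) ` (SIGMA Ss:GG A s l (Suc j).
           {S. S \<subseteq> TT A j - (\<Union>i\<in>{Suc j..s}. Ss i) \<and> card S = l!(j-1)})"
      by (intro image_eqI[where x="(?Ss, Ss' j)"]) auto
  qed
next
  show "(\<lambda>(Ss,S). Ss(j:=S)) ` (SIGMA Ss:GG A s l (Suc j).
           {S. S \<subseteq> TT A j - (\<Union>i\<in>{Suc j..s}. Ss i) \<and> card S = l!(j-1)}) \<subseteq> GG A s l j"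
  proof clarify
    fix Ss S assume h: "Ss \<in> GG A s l (Suc j)" "S \<subseteq> TT A j - (\<Union>i\<in>{Suc j..s}. Ss i)"
      "card S = l!(j-1)"
    have sub: "\<And>i. i \<in> {Suc j..s} \<Longrightarrow> Ss i \<subseteq> TT A i" using h(1) unfolding GG_def by auto
    show "Ss(j:=S) \<in> GG A s l j"
      unfolding GG_def
    proof (intro CollectI conjI allI ballI impI)
      fix i assume "i < j \<or> s < i" then show "(Ss(j := S)) i = {}"
        using h(1) assms unfolding GG_def by auto
    next
      fix i assume i: "i \<in> {j..s}"
      show "(Ss(j := S)) i \<subseteq> TT A i" using h i sub by (cases "i = j") auto
      show "card ((Ss(j := S)) i) = l ! (i - 1)" using h i unfolding GG_def by (cases "i = j") auto
    next
      fix i i' assume i: "i \<in> {j..s}" "i' \<in> {j..s}" "i \<noteq> i'"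
      show "(Ss(j := S)) i \<inter> (Ss(j := S)) i' = {}"
      proof (cases "i = j")
        case True then show ?thesis using h i by auto
      next
        case False
        show ?thesis
        proof (cases "i' = j")
          case True then show ?thesis using h i False by auto
        next
          case False2: False
          then show ?thesis using h(1) i False unfolding GG_def by auto
        qed
      qed
    qed
  qed
qed

lemma GG_finite_sets: "Ss \<in> GG A s l j \<Longrightarrow> finite (Ss i)"
proof (cases "i < j \<or> s < i")
  case True
  assume "Ss \<in> GG A s l j" with True show ?thesis unfolding GG_def by auto
next
  case False
  assume "Ss \<in> GG A s l j" with False have "Ss i \<subseteq> TT A i" unfolding GG_def by auto
  then show ?thesis using finite_subset finite_TT by metis
qed

lemma GG_card:
  assumes "j \<le> Suc s"
  shows "finite (GG A s l j) \<and> card (GG A s l j) =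
    (\<Prod>i=j..s. (card (TT A i) - (\<Sum>i'=Suc i..s. l ! (i' - 1))) choose (l ! (i - 1)))"
  using assms
proof (induction j rule: inc_induct)
  case base
  then show ?case by (simp add: GG_base)
next
  case (step n)
  have ns: "n \<le> s" using step by simp
  let ?B = "\<lambda>Ss. {S. S \<subseteq> TT A n - (\<Union>i\<in>{Suc n..s}. Ss i) \<and> card S = l!(n-1)}"
  let ?c = "(card (TT A n) - (\<Sum>i'=Suc n..s. l ! (i' - 1))) choose (l ! (n - 1))"
  have inj: "inj_on (\<lambda>(Ss,S). Ss(n:=S)) (SIGMA Ss:GG A s l (Suc n). ?B Ss)"
  proof (rule inj_onI, clarify)
    fix Ss S Ss2 S2
    assume a: "Ss \<in> GG A s l (Suc n)" "Ss2 \<in> GG A s l (Suc n)" "Ss(n := S) = Ss2(n := S2)"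
    have "Ss n = {}" "Ss2 n = {}" using a unfolding GG_def by auto
    with a(3) show "Ss = Ss2 \<and> S = S2"
      by (metis fun_upd_eqD fun_upd_triv fun_upd_upd)
  qed
  have Bc: "card (?B Ss) = ?c" if Ss: "Ss \<in> GG A s l (Suc n)" for Ss
  proof -
    have U: "(\<Union>i\<in>{Suc n..s}. Ss i) \<subseteq> TT A n"
    proof
      fix x assume "x \<in> (\<Union>i\<in>{Suc n..s}. Ss i)"
      then obtain i where "i \<in> {Suc n..s}" "x \<in> Ss i" by auto
      moreover have "TT A i \<subseteq> TT A n" using \<open>i \<in> {Suc n..s}\<close> by (intro TT_mono) auto
      ultimately show "x \<in> TT A n" using Ss unfolding GG_def by blast
    qed
    have fin: "\<And>i. finite (Ss i)" using GG_finite_sets[OF Ss] .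
    have "card (\<Union>i\<in>{Suc n..s}. Ss i) = (\<Sum>i=Suc n..s. card (Ss i))"
      by (rule card_UN_disjoint) (use Ss fin in \<open>auto simp: GG_def\<close>)
    also have "\<dots> = (\<Sum>i=Suc n..s. l ! (i - 1))"
      by (rule sum.cong) (use Ss in \<open>auto simp: GG_def\<close>)
    finally have cU: "card (\<Union>i\<in>{Suc n..s}. Ss i) = (\<Sum>i=Suc n..s. l ! (i - 1))" .
    have "card (?B Ss) = card (TT A n - (\<Union>i\<in>{Suc n..s}. Ss i)) choose (l!(n-1))"
      by (rule n_subsets) simp
    also have "card (TT A n - (\<Union>i\<in>{Suc n..s}. Ss i)) = card (TT A n) - (\<Sum>i=Suc n..s. l ! (i - 1))"
      using card_Diff_subset[OF finite_subset[OF U finite_TT] U] cU by simp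
    finally show ?thesis .
  qed
  have fin: "finite (GG A s l (Suc n))" using step by simp
  have "GG A s l n = (\<lambda>(Ss,S). Ss(n:=S)) ` (SIGMA Ss:GG A s l (Suc n). ?B Ss)"
    by (rule GG_step[OF ns])
  moreover have "finite (SIGMA Ss:GG A s l (Suc n). ?B Ss)"
    using fin by (intro finite_SigmaI) auto
  moreover have "card (SIGMA Ss:GG A s l (Suc n). ?B Ss) = card (GG A s l (Suc n)) * ?c"
    using fin Bc by (simp add: card_SigmaI)
  ultimately have "finite (GG A s l n) \<and> card (GG A s l n) = ?c * card (GG A s l (Suc n))"
    using card_image[OF inj] by simp
  then show ?case using step ns by (simp add: prod.atLeast_Suc_atMost)
qed


lemma GG1: "finite (GG A s l 1)"
  "card (GG A s l 1) = (\<Prod>i=1..s. (card (TT A i) - (\<Sum>i'=i+1..s. l ! (i' - 1))) choose (l ! (i - 1)))"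
  using GG_card[of 1 s A l] by auto

definition HH :: "'a multiset \<Rightarrow> nat \<Rightarrow> nat \<Rightarrow> (nat \<Rightarrow> 'a set) set" where
  "HH A s m = {Ss. (\<forall>i. (i < 1 \<or> s < i) \<longrightarrow> Ss i = {}) \<and> (\<forall>i\<in>{1..s}. Ss i \<subseteq> TT A i) \<and>
     (\<forall>i\<in>{1..s}. \<forall>i'\<in>{1..s}. i \<noteq> i' \<longrightarrow> Ss i \<inter> Ss i' = {}) \<and>
     (\<Sum>i=1..s. i * card (Ss i)) = m}"

definition prof :: "nat \<Rightarrow> (nat \<Rightarrow> 'a set) \<Rightarrow> nat list" where
  "prof s Ss = map (\<lambda>i. card (Ss i)) [1..<Suc s]"

lemma prof_nth: "1 \<le> i \<Longrightarrow> i \<le> s \<Longrightarrow> prof s Ss ! (i - 1) = card (Ss i)"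
proof -
  assume a: "1 \<le> i" "i \<le> s"
  have "[1..<Suc s] ! (i - 1) = 1 + (i - 1)" by (rule nth_upt) (use a in simp)
  then have "[1..<Suc s] ! (i - 1) = i" using a by simp
  then show ?thesis unfolding prof_def using a by (subst nth_map) auto
qed

lemma prof_nth': "Suc 0 \<le> i \<Longrightarrow> i \<le> s \<Longrightarrow> prof s Ss ! (i - Suc 0) = card (Ss i)"
  using prof_nth[of i s Ss] by simp

lemma length_prof[simp]: "length (prof s Ss) = s"
  unfolding prof_def by simp

lemma Lam_mem:
  assumes "s = min m (maxmult A)"
  shows "l \<in> Lam m A \<longleftrightarrow> length l = s \<and> (\<Sum>i=1..s. i * l ! (i - 1)) = m \<and>
         (\<forall>j\<in>{1..s}. (\<Sum>i=j..s. l ! (i - 1)) \<le> adj A j)"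
  using assms unfolding Lam_def Let_def by simp

lemma adj_TT: "adj A j = card (TT A j)"
  unfolding adj_def TT_def by simp

lemma HH_sub:
  assumes s: "s = min m (maxmult A)" and Ss: "Ss \<in> HH A s m"
  shows "prof s Ss \<in> Lam m A \<and> Ss \<in> GG A s (prof s Ss) 1"
proof -
  have sub: "\<And>i. i \<in> {1..s} \<Longrightarrow> Ss i \<subseteq> TT A i" using Ss unfolding HH_def by auto
  have fin: "finite (Ss i)" if "i \<in> {1..s}" for i using finite_subset[OF sub[OF that] finite_TT] .
  have "(\<Sum>i=1..s. i * prof s Ss ! (i - 1)) = (\<Sum>i=1..s. i * card (Ss i))"
    by (rule sum.cong) (auto simp: prof_nth prof_nth')
  also have "\<dots> = m" using Ss unfolding HH_def by auto
  finally have c2: "(\<Sum>i=1..s. i * prof s Ss ! (i - 1)) = m" .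
  have c3: "(\<Sum>i=j..s. prof s Ss ! (i - 1)) \<le> adj A j" if j: "j \<in> {1..s}" for j
  proof -
    have "(\<Sum>i=j..s. prof s Ss ! (i - 1)) = (\<Sum>i=j..s. card (Ss i))"
      by (rule sum.cong) (use j in \<open>auto simp: prof_nth prof_nth'\<close>)
    also have "\<dots> = card (\<Union>i\<in>{j..s}. Ss i)"
      by (rule card_UN_disjoint[symmetric]) (use j fin Ss in \<open>auto simp: HH_def\<close>)
    also have "\<dots> \<le> card (TT A j)"
    proof (rule card_mono[OF finite_TT])
      show "(\<Union>i\<in>{j..s}. Ss i) \<subseteq> TT A j"
      proof
        fix x assume "x \<in> (\<Union>i\<in>{j..s}. Ss i)"
        then obtain i where i: "i \<in> {j..s}" "x \<in> Ss i" by auto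
        have "TT A i \<subseteq> TT A j" using i by (intro TT_mono) auto
        then show "x \<in> TT A j" using i sub[of i] j by auto
      qed
    qed
    finally show ?thesis by (simp add: adj_TT)
  qed
  have "prof s Ss \<in> Lam m A" using c2 c3 by (simp add: Lam_mem[OF s])
  moreover have "Ss \<in> GG A s (prof s Ss) 1"
    using Ss unfolding HH_def GG_def by (auto simp: prof_nth prof_nth')
  ultimately show ?thesis by simp
qed

lemma GG_sub:
  assumes s: "s = min m (maxmult A)" and l: "l \<in> Lam m A" and Ss: "Ss \<in> GG A s l 1"
  shows "Ss \<in> HH A s m \<and> prof s Ss = l"
proof -
  have L: "length l = s" "(\<Sum>i=1..s. i * l ! (i - 1)) = m" using l Lam_mem[OF s] by auto
  have "(\<Sum>i=1..s. i * card (Ss i)) = (\<Sum>i=1..s. i * l ! (i - 1))"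
    by (rule sum.cong) (use Ss in \<open>auto simp: GG_def\<close>)
  then have "Ss \<in> HH A s m" using Ss L unfolding HH_def GG_def by auto
  moreover have "prof s Ss = l"
  proof (rule nth_equalityI)
    show "length (prof s Ss) = length l" using L by simp
    fix k assume "k < length (prof s Ss)"
    then have k: "k < s" by simp
    have "prof s Ss ! k = prof s Ss ! (Suc k - 1)" by simp
    also have "\<dots> = card (Ss (Suc k))" using k by (intro prof_nth) auto
    also have "\<dots> = l ! (Suc k - 1)" using Ss k unfolding GG_def by auto
    finally show "prof s Ss ! k = l ! k" by simp
  qed
  ultimately show ?thesis by simp
qed

lemma finite_Lam: "finite (Lam m A)"
proof -
  let ?s = "min m (maxmult A)"
  have "Lam m A \<subseteq> {xs. set xs \<subseteq> {..m} \<and> length xs = ?s}"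
  proof
    fix l assume l: "l \<in> Lam m A"
    have L: "length l = ?s" "(\<Sum>i=1..?s. i * l ! (i - 1)) = m" using l Lam_mem[of ?s m A] by auto
    have "x \<in> {..m}" if "x \<in> set l" for x
    proof -
    from that obtain k where k: "k < ?s" "x = l ! k" using L by (auto simp: in_set_conv_nth)
    have "Suc k * l ! (Suc k - 1) \<le> (\<Sum>i=1..?s. i * l ! (i - 1))"
      by (rule member_le_sum) (use k in auto)
    then have "Suc k * x \<le> m" using k L by simp
    then show "x \<in> {..m}" by (simp add: le_trans[OF _ \<open>Suc k * x \<le> m\<close>])
    qed
    then show "l \<in> {xs. set xs \<subseteq> {..m} \<and> length xs = ?s}" using L by auto
  qed
  moreover have "finite {xs. set xs \<subseteq> {..m} \<and> length xs = ?s}"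
    by (rule finite_lists_length_eq) simp
  ultimately show ?thesis by (rule finite_subset)
qed

lemma card_HH:
  assumes s: "s = min m (maxmult A)"
  shows "card (HH A s m) = (\<Sum>l\<in>Lam m A. card (GG A s l 1))"
proof -
  have eq: "HH A s m = (\<Union>l\<in>Lam m A. GG A s l 1)"
  proof
    show "HH A s m \<subseteq> (\<Union>l\<in>Lam m A. GG A s l 1)" using HH_sub[OF s] by blast
    show "(\<Union>l\<in>Lam m A. GG A s l 1) \<subseteq> HH A s m" using GG_sub[OF s] by blast
  qed
  show ?thesis unfolding eq
  proof (rule card_UN_disjoint[OF finite_Lam])
    show "\<forall>l\<in>Lam m A. finite (GG A s l 1)" using GG1(1) by blast
    show "\<forall>l\<in>Lam m A. \<forall>l'\<in>Lam m A. l \<noteq> l' \<longrightarrow> GG A s l 1 \<inter> GG A s l' 1 = {}"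
      using GG_sub[OF s] by blast
  qed
qed

definition Phi :: "nat \<Rightarrow> 'a multiset \<Rightarrow> nat \<Rightarrow> 'a set" where
  "Phi s B = (\<lambda>i. if 1 \<le> i \<and> i \<le> s then {x. count B x = i} else {})"

lemma cnt_le:
  assumes A: "A \<noteq> {#}" and B: "B \<in> submsets m A"
  shows "count B x \<le> min m (maxmult A)"
proof -
  have sub: "B \<subseteq># A" "size B = m" using B unfolding submsets_def by auto
  have "count B x \<le> m" using count_le_size[of B x] sub by simp
  moreover have "count B x \<le> maxmult A"
  proof (cases "x \<in># A")
    case True
    then have "count A x \<le> maxmult A" unfolding maxmult_def by (intro Max_ge) auto
    then show ?thesis using sub(1) by (meson le_trans subseteq_mset_def)
  next
    case False
    then show ?thesis using sub(1) by (metis count_eq_zero_iff le0 le_zero_eq subseteq_mset_def)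
  qed
  ultimately show ?thesis by simp
qed

lemma size_group:
  assumes "\<And>x. count B x \<le> s"
  shows "size B = (\<Sum>i=1..s. i * card {x. count B x = i})"
proof -
  have "size B = sum (count B) (set_mset B)" by (rule size_multiset_overloaded_eq)
  also have "\<dots> = (\<Sum>y\<in>{1..s}. sum (count B) {x \<in> set_mset B. count B x = y})"
    by (rule sum.group[symmetric]) (use assms in \<open>auto simp: Suc_le_eq\<close>)
  also have "\<dots> = (\<Sum>i=1..s. i * card {x. count B x = i})"
  proof (rule sum.cong)
    fix y assume y: "y \<in> {1..s}"
    have e: "{x \<in> set_mset B. count B x = y} = {x. count B x = y}" using y by auto
    show "sum (count B) {x \<in> set_mset B. count B x = y} = y * card {x. count B x = y}"
      unfolding e by simp
  qed simp
  finally show ?thesis .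
qed

lemma card_submsets:
  assumes A: "A \<noteq> {#}" and s: "s = min m (maxmult A)"
  shows "card (submsets m A) = card (HH A s m)"
proof -
  have cl: "\<And>B x. B \<in> submsets m A \<Longrightarrow> count B x \<le> s" using cnt_le[OF A] s by blast
  have inj: "inj_on (Phi s) (submsets m A)"
  proof (rule inj_onI)
    fix B1 B2 assume b: "B1 \<in> submsets m A" "B2 \<in> submsets m A" "Phi s B1 = Phi s B2"
    show "B1 = B2"
    proof (rule multiset_eqI)
      fix x
      have key: "count Bb x = i \<Longrightarrow> 1 \<le> i \<Longrightarrow> Bb \<in> submsets m A \<Longrightarrow> x \<in> Phi s Bb i" for Bb i
        using cl[of Bb x] unfolding Phi_def by auto
      show "count B1 x = count B2 x"
      proof (cases "count B1 x = 0")
        case True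
        show ?thesis
        proof (rule ccontr)
          assume "count B1 x \<noteq> count B2 x"
          then have "x \<in> Phi s B2 (count B2 x)" using True b by (intro key) auto
          then have "x \<in> Phi s B1 (count B2 x)" using b by simp
          then have "count B1 x = count B2 x" unfolding Phi_def by (simp split: if_splits)
          then show False using \<open>count B1 x \<noteq> count B2 x\<close> by simp
        qed
      next
        case False
        then have "x \<in> Phi s B1 (count B1 x)" using b by (intro key) auto
        then have "x \<in> Phi s B2 (count B1 x)" using b by simp
        then show ?thesis unfolding Phi_def by (auto split: if_splits)
      qed
    qed
  qed
  have img: "Phi s ` submsets m A = HH A s m"
  proof
    show "Phi s ` submsets m A \<subseteq> HH A s m"
    proof clarify
      fix B assume B: "B \<in> submsets m A"
      have sub: "B \<subseteq># A" "size B = m" using B unfolding submsets_def by auto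
      have "(\<Sum>i=1..s. i * card (Phi s B i)) = (\<Sum>i=1..s. i * card {x. count B x = i})"
        by (rule sum.cong) (auto simp: Phi_def)
      also have "\<dots> = m" using size_group[of B s] cl[OF B] sub by simp
      finally have S: "(\<Sum>i=1..s. i * card (Phi s B i)) = m" .
      have T: "Phi s B i \<subseteq> TT A i" if "i \<in> {1..s}" for i
      proof
        fix x assume "x \<in> Phi s B i"
        then have "count B x = i" using that by (simp add: Phi_def)
        moreover have "count B x \<le> count A x" using sub(1) by (rule mset_subset_eq_count)
        ultimately show "x \<in> TT A i" using that unfolding TT_def by (auto intro: mset_subset_eqD[OF sub(1)])
      qed
      show "Phi s B \<in> HH A s m" unfolding HH_def using S T by (auto simp: Phi_def)
    qed
  next
    show "HH A s m \<subseteq> Phi s ` submsets m A"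
    proof
      fix Ss assume Ss: "Ss \<in> HH A s m"
      have sub: "\<And>i. i \<in> {1..s} \<Longrightarrow> Ss i \<subseteq> TT A i" using Ss unfolding HH_def by auto
      have fin: "finite (Ss i)" if "i \<in> {1..s}" for i using finite_subset[OF sub[OF that] finite_TT] .
      have dis: "\<And>i i'. i \<in> {1..s} \<Longrightarrow> i' \<in> {1..s} \<Longrightarrow> i \<noteq> i' \<Longrightarrow> Ss i \<inter> Ss i' = {}"
        using Ss unfolding HH_def by auto
      have out: "Ss i = {}" if "i \<notin> {1..s}" for i
      proof -
        have "i < 1 \<or> s < i" using that by auto
        then show ?thesis using Ss unfolding HH_def by blast
      qed
      define B where "B = (\<Sum>i\<in>{1..s}. repeat_mset i (mset_set (Ss i)))"
      have cB: "count B x = (\<Sum>i\<in>{1..s}. i * count (mset_set (Ss i)) x)" for x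
        unfolding B_def by (simp add: count_sum)
      have c1: "count B x = i0" if i0: "i0 \<in> {1..s}" "x \<in> Ss i0" for x i0
      proof -
        have "count B x = i0 * count (mset_set (Ss i0)) x +
                (\<Sum>i\<in>{1..s}-{i0}. i * count (mset_set (Ss i)) x)"
          unfolding cB by (rule sum.remove) (use i0 in auto)
        also have "(\<Sum>i\<in>{1..s}-{i0}. i * count (mset_set (Ss i)) x) = 0"
        proof (rule sum.neutral, rule ballI)
          fix i assume "i \<in> {1..s} - {i0}"
          then have "x \<notin> Ss i" using dis[of i i0] i0 by auto
          then show "i * count (mset_set (Ss i)) x = 0" by simp
        qed
        finally show ?thesis using i0 fin by simp
      qed
      have c0: "count B x = 0" if "\<forall>i\<in>{1..s}. x \<notin> Ss i" for x
        unfolding cB using that by (intro sum.neutral) simp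
      have cs: "(\<exists>i\<in>{1..s}. x \<in> Ss i \<and> count B x = i) \<or> count B x = 0" for x
      proof (cases "\<exists>i\<in>{1..s}. x \<in> Ss i")
        case True
        then obtain i where i: "i \<in> {1..s}" "x \<in> Ss i" by blast
        have "count B x = i" by (rule c1[OF i])
        then show ?thesis using i by blast
      next
        case False
        then have "count B x = 0" by (intro c0) blast
        then show ?thesis by blast
      qed
      have "B \<subseteq># A"
        unfolding subseteq_mset_def
      proof
        fix x
        show "count B x \<le> count A x"
          using cs[of x]
        proof
          assume "\<exists>i\<in>{1..s}. x \<in> Ss i \<and> count B x = i"
          then obtain i where "i \<in> {1..s}" "x \<in> Ss i" "count B x = i" by blast
          then show ?thesis using sub[of i] unfolding TT_def by auto
        qed simp
      qed
      moreover have "size B = m"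
      proof -
        have "size B = (\<Sum>i\<in>{1..s}. i * card (Ss i))" unfolding B_def by simp
        then show ?thesis using Ss unfolding HH_def by simp
      qed
      ultimately have Bs: "B \<in> submsets m A" unfolding submsets_def by simp
      have "Phi s B = Ss"
      proof
        fix i
        show "Phi s B i = Ss i"
        proof (cases "i \<in> {1..s}")
          case False then show ?thesis using out[of i] unfolding Phi_def by auto
        next
          case True
          have "{x. count B x = i} = Ss i"
          proof
            show "Ss i \<subseteq> {x. count B x = i}" using c1 True by auto
            show "{x. count B x = i} \<subseteq> Ss i"
            proof
              fix x assume "x \<in> {x. count B x = i}"
              then have ci: "count B x = i" by simp
              have "i \<noteq> 0" using True by simp
              then have "count B x \<noteq> 0" using ci by simp
              have "\<exists>i'\<in>{1..s}. x \<in> Ss i' \<and> count B x = i'"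
                using cs[of x] \<open>count B x \<noteq> 0\<close> by (elim disjE) simp_all
              then obtain i' where "x \<in> Ss i'" "count B x = i'" by blast
              then show "x \<in> Ss i" using ci by simp
            qed
          qed
          then show ?thesis using True unfolding Phi_def by auto
        qed
      qed
      then show "Ss \<in> Phi s ` submsets m A" using Bs by blast
    qed
  qed
  show ?thesis using card_image[OF inj] img by simp
qed

theorem theorem4p1:
  fixes A :: "'a multiset" and m :: nat
  assumes "A \<noteq> {#}"
  shows "card (submsets m A) =
    (let s = min m (maxmult A) in
      \<Sum>l\<in>Lam m A. \<Prod>j=1..s. (adj A j - (\<Sum>i=j+1..s. l ! (i - 1))) choose (l ! (j - 1)))"
proof -
  define s where "s = min m (maxmult A)"
  have "card (submsets m A) = (\<Sum>l\<in>Lam m A. card (GG A s l 1))"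
    using card_submsets[OF assms s_def] card_HH[OF s_def] by simp
  also have "\<dots> = (\<Sum>l\<in>Lam m A. \<Prod>j=1..s. (adj A j - (\<Sum>i=j+1..s. l ! (i - 1))) choose (l ! (j - 1)))"
    by (rule sum.cong) (simp_all only: GG1(2) adj_TT)
  finally show ?thesis unfolding s_def Let_def .
qed

end
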